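(* Let $F_t$, $t\in[0,1]$, be a one-parameter family on a complete metric space $(\mathbb X,d)$ satisfying (H1) and (H2). If $A^\bullet$ is any upper transition attractor of $F_t$, then (i) $F_1(A^\bullet)=A^\bullet$. If in addition $F_t$ satisfies (H3), then (ii) $Q\subseteq A^\bullet$, and in particular $A_\bullet\subseteq A^\bullet$, where $A_\bullet$ is the lower transition attractor.
   Context: Let $(\mathbb X,d)$ be a complete metric space. A one-parameter family is $F_t=\{f_{(1,t)},\dots,f_{(N,t)}\}$, $t\in[0,1]$, $N\ge2$, of continuous self-maps of $\mathbb X$. $\mathrm{Lip}(f,d)=\sup_{x\ne y}d(f(x),f(y))/d(x,y)$ and $\mathrm{Lip}(F_t,d)=\max_i\mathrm{Lip}(f_{(i,t)},d)$. Conditions: (H1) for every $x\in\mathbb X$ and every $i$, the map $t\mapsto f_{(i,t)}(x)$ is continuous on $[0,1]$; (H2) $\mathrm{Lip}(F_t,d)<1$ for all $t\in[0,1)$; (H3) for each $i$ the limit $q_i=\lim_{t\to1^-}q_{i,t}$ exists, where $q_{i,t}$ is the unique fixed point of $f_{(i,t)}$ for $t\in[0,1)$; $Q=\{q_1,\dots,q_N\}$. For an IFS $F$ and $S\subseteq\mathbb X$, $F(S)=\overline{\bigcup_{f\in F}f(S)}$. For $t\in[0,1)$, $A_t$ is the attractor of $F_t$, the unique nonempty compact set with $F_t(A_t)=A_t$. With $h$ the Hausdorff metric, an upper transition attractor is a compact set $A^\bullet$ for which there is an increasing sequence $t_n\in[0,1)$, $t_n\to1$, with $h(A_{t_n},A^\bullet)\to0$.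 The lower transition attractor is the smallest (w.r.t. inclusion) set $A_\bullet$ with $F_1(A_\bullet)=A_\bullet$ and $Q\subseteq A_\bullet$. *)

theory Defs
  imports "HOL-Analysis.Analysis"
begin

text \<open>A one-parameter family: maps f i t, indices i < N, parameter t in [0,1].\<close>

definition lip_const :: "('a::metric_space \<Rightarrow> 'a) \<Rightarrow> ereal" where
  "lip_const g = (SUP p\<in>{p. fst p \<noteq> snd p}. ereal (dist (g (fst p)) (g (snd p)) / dist (fst p) (snd p)))"

definition lip_family :: "(nat \<Rightarrow> real \<Rightarrow> 'a::metric_space \<Rightarrow> 'a) \<Rightarrow> nat \<Rightarrow> real \<Rightarrow> ereal" where
  "lip_family f N t = Max ((\<lambda>i. lip_const (f i t)) ` {..<N})"

definition ifs_img :: "(nat \<Rightarrow> real \<Rightarrow> 'a::topological_space \<Rightarrow> 'a) \<Rightarrow> nat \<Rightarrow> real \<Rightarrow> 'a set \<Rightarrow> 'a set" where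
  "ifs_img f N t S = closure (\<Union>i<N. f i t ` S)"

definition attractor :: "(nat \<Rightarrow> real \<Rightarrow> 'a::metric_space \<Rightarrow> 'a) \<Rightarrow> nat \<Rightarrow> real \<Rightarrow> 'a set" where
  "attractor f N t = (THE A. A \<noteq> {} \<and> compact A \<and> ifs_img f N t A = A)"

definition hausdorff_dist :: "'a::metric_space set \<Rightarrow> 'a set \<Rightarrow> real" where
  "hausdorff_dist A B = max (SUP a\<in>A. infdist a B) (SUP b\<in>B. infdist b A)"

text \<open>Upper transition attractor (a nonempty compact set, as the Hausdorff metric lives
  on nonempty compact sets).\<close>
definition upper_transition_attractor ::
  "(nat \<Rightarrow> real \<Rightarrow> 'a::metric_space \<Rightarrow> 'a) \<Rightarrow> nat \<Rightarrow> 'a set \<Rightarrow> bool" where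
  "upper_transition_attractor f N B \<longleftrightarrow> B \<noteq> {} \<and> compact B \<and>
     (\<exists>tn::nat \<Rightarrow> real. incseq tn \<and> (\<forall>n. tn n \<in> {0..<1}) \<and> tn \<longlonglongrightarrow> 1 \<and>
        (\<lambda>n. hausdorff_dist (attractor f N (tn n)) B) \<longlonglongrightarrow> 0)"

definition fixpt :: "('a \<Rightarrow> 'a) \<Rightarrow> 'a" where
  "fixpt g = (THE x. g x = x)"

definition lower_transition_attractor ::
  "(nat \<Rightarrow> real \<Rightarrow> 'a::metric_space \<Rightarrow> 'a) \<Rightarrow> nat \<Rightarrow> 'a set \<Rightarrow> 'a set \<Rightarrow> bool" where
  "lower_transition_attractor f N Q B \<longleftrightarrow> ifs_img f N 1 B = B \<and> Q \<subseteq> B \<and>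
     (\<forall>C. ifs_img f N 1 C = C \<and> Q \<subseteq> C \<longrightarrow> B \<subseteq> C)"

end

theory Submission
  imports Defs
begin

lemma lip_extract:
  fixes f :: "nat \<Rightarrow> real \<Rightarrow> 'a::metric_space \<Rightarrow> 'a"
  assumes N: "0 < N" and L: "lip_family f N t < 1"
  shows "\<exists>c. 0 \<le> c \<and> c < 1 \<and> (\<forall>i<N. \<forall>x y. dist (f i t x) (f i t y) \<le> c * dist x y)"
proof -
  define L where "L = lip_family f N t"
  have Lle: "lip_const (f i t) \<le> L" if "i < N" for i
    unfolding L_def lip_family_def using that by (intro Max_ge) auto
  define c where "c = max 0 (real_of_ereal L)"
  have "L \<noteq> \<infinity>" using L L_def by auto
  have c1: "c < 1"
  proof (cases L)
    case (real r) then show ?thesis using L L_def c_def by auto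
  next
    case PInf then show ?thesis using \<open>L \<noteq> \<infinity>\<close> by auto
  next
    case MInf then show ?thesis using c_def by auto
  qed
  have "dist (f i t x) (f i t y) \<le> c * dist x y" if i: "i < N" for i x y
  proof (cases "x = y")
    case True then show ?thesis by simp
  next
    case False
    have "ereal (dist (f i t x) (f i t y) / dist x y) \<le> lip_const (f i t)"
      unfolding lip_const_def
      by (rule SUP_upper2[of "(x,y)"]) (use False in auto)
    also have "\<dots> \<le> L" using Lle i .
    finally have le: "ereal (dist (f i t x) (f i t y) / dist x y) \<le> L" .
    then obtain r where r: "L = ereal r" using \<open>L \<noteq> \<infinity>\<close> by (cases L) auto
    have "dist (f i t x) (f i t y) / dist x y \<le> c" using le r c_def by auto
    then show ?thesis using False by (simp add: divide_le_eq mult.commute)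
  qed
  then show ?thesis using c1 c_def by (intro exI[of _ c]) auto
qed


lemma lip_cont:
  fixes g :: "'a::metric_space \<Rightarrow> 'b::metric_space"
  assumes "\<forall>x y. dist (g x) (g y) \<le> c * dist x y" "0 \<le> c"
  shows "continuous_on S g"
proof -
  have "c-lipschitz_on S g" using assms by (intro lipschitz_onI) auto
  then show ?thesis by (rule lipschitz_on_continuous_on)
qed

lemma ifs_unique_sub:
  fixes g :: "nat \<Rightarrow> 'a::metric_space \<Rightarrow> 'a"
  assumes c: "0 \<le> c" "c < 1"
    and lip: "\<forall>i<N. \<forall>x y. dist (g i x) (g i y) \<le> c * dist x y"
    and A: "compact A" "A \<noteq> {}" "closure (\<Union>i<N. g i ` A) = A"
    and B: "compact B" "B \<noteq> {}" "closure (\<Union>i<N. g i ` B) = B"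
  shows "A \<subseteq> B"
proof -
  have cont: "continuous_on S (g i)" if "i < N" for i S
    using lip that c by (intro lip_cont[of _ c]) auto
  have "compact (\<Union>i<N. g i ` A)"
    using A cont by (intro compact_UN) (auto intro: compact_continuous_image)
  then have Aeq: "(\<Union>i<N. g i ` A) = A"
    using A(3) by (simp add: closure_closed compact_imp_closed)
  have Binv: "g i ` B \<subseteq> B" if "i < N" for i
    using that closure_subset[of "\<Union>i<N. g i ` B"] B(3) by auto
  obtain D where D: "\<And>x y. x \<in> A \<union> B \<Longrightarrow> y \<in> A \<union> B \<Longrightarrow> dist x y \<le> D"
    using compact_imp_bounded[of "A \<union> B"] A B bounded_two_points by (metis compact_Un)
  obtain b0 where b0: "b0 \<in> B" using B by auto
  have claim: "\<forall>a\<in>A. \<exists>x\<in>A. \<exists>z\<in>B. \<exists>y\<in>B. dist a y \<le> c^n * dist x z" for n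
  proof (induction n)
    case 0 then show ?case using b0 by auto
  next
    case (Suc n)
    show ?case
    proof
      fix a assume "a \<in> A"
      then obtain i a' where i: "i < N" "a' \<in> A" "a = g i a'" using Aeq by blast
      obtain x z y where xy: "x \<in> A" "z \<in> B" "y \<in> B" "dist a' y \<le> c^n * dist x z"
        using Suc i by blast
      have "dist a (g i y) \<le> c * dist a' y" using lip i by auto
      also have "\<dots> \<le> c * (c^n * dist x z)" using xy c by (intro mult_left_mono) auto
      finally have d: "dist a (g i y) \<le> c ^ Suc n * dist x z" by (simp add: mult.assoc)
      have gy: "g i y \<in> B" using xy Binv[OF i(1)] by auto
      show "\<exists>x\<in>A. \<exists>z\<in>B. \<exists>y\<in>B. dist a y \<le> c ^ Suc n * dist x z"
        using xy gy d by blast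
    qed
  qed
  show ?thesis
  proof
    fix a assume a: "a \<in> A"
    have le: "infdist a B \<le> c^n * D" for n
    proof -
      obtain x z y where xy: "x \<in> A" "z \<in> B" "y \<in> B" "dist a y \<le> c^n * dist x z"
        using claim a by blast
      have "c^n * dist x z \<le> c^n * D" using D[of x z] xy c by (intro mult_left_mono) auto
      then show ?thesis using infdist_le[OF xy(3), of a] xy by linarith
    qed
    have "(\<lambda>n. c^n * D) \<longlonglongrightarrow> 0 * D"
      using c by (intro tendsto_mult LIMSEQ_power_zero tendsto_const) auto
    then have "infdist a B \<le> 0" using le by (intro LIMSEQ_le_const) auto
    then have "infdist a B = 0" using infdist_nonneg[of a B] by linarith
    then show "a \<in> B" using B in_closed_iff_infdist_zero compact_imp_closed by blast
  qed
qed

lemma ifs_fix_in: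
  fixes g :: "nat \<Rightarrow> 'a::metric_space \<Rightarrow> 'a"
  assumes c: "0 \<le> c" "c < 1"
    and lip: "\<forall>i<N. \<forall>x y. dist (g i x) (g i y) \<le> c * dist x y"
    and A: "compact A" "A \<noteq> {}" "closure (\<Union>i<N. g i ` A) = A"
    and i: "i < N" and q: "g i q = q"
  shows "q \<in> A"
proof -
  have Ainv: "g i ` A \<subseteq> A"
    using i closure_subset[of "\<Union>i<N. g i ` A"] A(3) by auto
  obtain a where a: "a \<in> A" using A by auto
  have inA: "(g i ^^ n) a \<in> A" for n by (induction n) (use a Ainv in auto)
  have dl: "dist ((g i ^^ n) a) q \<le> c^n * dist a q" for n
  proof (induction n)
    case 0 then show ?case by simp
  next
    case (Suc n)
    have "dist ((g i ^^ Suc n) a) q = dist (g i ((g i ^^ n) a)) (g i q)" using q by simp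
    also have "\<dots> \<le> c * dist ((g i ^^ n) a) q" using lip i by auto
    also have "\<dots> \<le> c * (c^n * dist a q)" using Suc c by (intro mult_left_mono) auto
    finally show ?case by (simp add: mult.assoc)
  qed
  have le: "infdist q A \<le> c^n * dist a q" for n
    using infdist_le[OF inA[of n], of q] dl[of n] by (simp add: dist_commute)
  have "(\<lambda>n. c^n * dist a q) \<longlonglongrightarrow> 0 * dist a q"
    using c by (intro tendsto_mult LIMSEQ_power_zero tendsto_const) auto
  then have "infdist q A \<le> 0" using le by (intro LIMSEQ_le_const) auto
  then have "infdist q A = 0" using infdist_nonneg[of q A] by linarith
  then show "q \<in> A" using A in_closed_iff_infdist_zero compact_imp_closed by blast
qed


primrec levs :: "(nat \<Rightarrow> 'a \<Rightarrow> 'a) \<Rightarrow> nat \<Rightarrow> 'a \<Rightarrow> nat \<Rightarrow> 'a set" where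
  "levs g N x0 0 = {x0}"
| "levs g N x0 (Suc n) = levs g N x0 n \<union> (\<Union>i<N. g i ` levs g N x0 n)"

lemma ifs_exists:
  fixes g :: "nat \<Rightarrow> 'a::complete_space \<Rightarrow> 'a"
  assumes c: "0 \<le> c" "c < 1" and N: "0 < N"
    and lip: "\<forall>i<N. \<forall>x y. dist (g i x) (g i y) \<le> c * dist x y"
  shows "\<exists>A. A \<noteq> {} \<and> compact A \<and> closure (\<Union>i<N. g i ` A) = A"
proof -
  have cont: "continuous_on S (g i)" if "i < N" for i S
    using lip that c by (intro lip_cont[of _ c]) auto
  obtain x0 where x0: "g 0 x0 = x0"
    using banach_fix_type[OF c, of "g 0"] lip N by blast
  define lev where "lev = levs g N x0"
  define S where "S = (\<Union>n. lev n)"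
  have lev0: "lev 0 = {x0}" and levS: "lev (Suc n) = lev n \<union> (\<Union>i<N. g i ` lev n)" for n
    by (simp_all add: lev_def)
  have fin: "finite (lev n)" for n by (induction n) (auto simp: lev0 levS)
  have x0lev: "x0 \<in> lev n" for n by (induction n) (auto simp: lev0 levS)
  have x0S: "x0 \<in> S" using x0lev S_def by auto
  have Sinv: "g i ` S \<subseteq> S" if "i < N" for i
  proof
    fix y assume "y \<in> g i ` S"
    then obtain x n where "x \<in> lev n" "y = g i x" unfolding S_def by auto
    then have "y \<in> lev (Suc n)" using that by (auto simp: levS)
    then show "y \<in> S" unfolding S_def by auto
  qed
  have Ssub: "x \<in> lev n \<Longrightarrow> x = x0 \<or> (\<exists>i<N. \<exists>x'\<in>S. x = g i x')" for x n
  proof (induction n arbitrary: x)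
    case 0 then show ?case by (simp add: lev0)
  next
    case (Suc n)
    then show ?case unfolding levS S_def by blast
  qed
  have Seq: "(\<Union>i<N. g i ` S) = S"
  proof
    show "(\<Union>i<N. g i ` S) \<subseteq> S" using Sinv by auto
    show "S \<subseteq> (\<Union>i<N. g i ` S)"
    proof
      fix x assume "x \<in> S"
      then obtain n where "x \<in> lev n" unfolding S_def by auto
      from Ssub[OF this] show "x \<in> (\<Union>i<N. g i ` S)"
        using x0 x0S N by (metis UN_iff image_eqI lessThan_iff)
    qed
  qed
  define M where "M = (\<Sum>i<N. dist (g i x0) x0)"
  define R where "R = M / (1 - c)"
  have M0: "M \<ge> 0" unfolding M_def by (intro sum_nonneg) auto
  have R0: "R \<ge> 0" unfolding R_def using M0 c by auto
  have RM: "c * R + M = R" unfolding R_def using c by (simp add: field_simps)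
  have bnd: "x \<in> lev n \<Longrightarrow> dist x x0 \<le> R" for x n
  proof (induction n arbitrary: x)
    case 0 then show ?case using R0 by (simp add: lev0)
  next
    case (Suc n)
    show ?case
    proof (cases "x \<in> lev n")
      case True then show ?thesis using Suc by auto
    next
      case False
      then obtain i z where iz: "i < N" "z \<in> lev n" "x = g i z" using Suc.prems by (auto simp: levS)
      have "dist x x0 \<le> dist (g i z) (g i x0) + dist (g i x0) x0"
        using iz dist_triangle by auto
      also have "\<dots> \<le> c * dist z x0 + M"
        using lip iz M_def by (intro add_mono) (auto intro!: member_le_sum)
      also have "\<dots> \<le> c * R + M" using Suc.IH[OF iz(2)] c by (intro add_mono mult_left_mono) auto
      finally show ?thesis using RM by simp
    qed
  qed
  have bndS: "x \<in> S \<Longrightarrow> dist x x0 \<le> R" for x using bnd S_def by auto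
  have net: "\<forall>x\<in>S. \<exists>y\<in>lev n. dist x y \<le> c^n * R" for n
  proof (induction n)
    case 0 then show ?case using bndS by (auto simp: lev0)
  next
    case (Suc n)
    show ?case
    proof
      fix x assume "x \<in> S"
      then obtain m where "x \<in> lev m" unfolding S_def by auto
      from Ssub[OF this] show "\<exists>y\<in>lev (Suc n). dist x y \<le> c ^ Suc n * R"
      proof
        assume "x = x0" then show ?thesis using x0lev[of "Suc n"] c R0 by (intro bexI[of _ x0]) auto
      next
        assume "\<exists>i<N. \<exists>x'\<in>S. x = g i x'"
        then obtain i x' where ix: "i < N" "x' \<in> S" "x = g i x'" by auto
        obtain y where y: "y \<in> lev n" "dist x' y \<le> c^n * R" using Suc ix by blast
        have "dist x (g i y) \<le> c * dist x' y" using lip ix by auto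
        also have "\<dots> \<le> c * (c^n * R)" using y c by (intro mult_left_mono) auto
        finally have "dist x (g i y) \<le> c ^ Suc n * R" by (simp add: mult.assoc)
        moreover have "g i y \<in> lev (Suc n)" using y ix by (auto simp: levS)
        ultimately show ?thesis by blast
      qed
    qed
  qed
  define K where "K = closure S"
  have "compact K"
    unfolding compact_eq_totally_bounded
  proof
    show "complete K" unfolding K_def complete_eq_closed by simp
    show "\<forall>\<epsilon>>0. \<exists>k. finite k \<and> K \<subseteq> (\<Union>x\<in>k. ball x \<epsilon>)"
    proof (intro allI impI)
      fix e :: real assume e: "e > 0"
      have "(\<lambda>n. c^n * R) \<longlonglongrightarrow> 0 * R"
        using c by (intro tendsto_mult LIMSEQ_power_zero tendsto_const) auto
      then have "eventually (\<lambda>n. c^n * R < e/2) sequentially"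
        using e by (intro order_tendstoD) auto
      then obtain n where n: "c^n * R < e/2" by (meson eventually_sequentially order_refl)
      have "S \<subseteq> (\<Union>y\<in>lev n. cball y (e/2))"
      proof
        fix x assume "x \<in> S"
        then obtain y where "y \<in> lev n" "dist x y \<le> c^n * R" using net by blast
        then have "x \<in> cball y (e/2)" using n by (auto simp: dist_commute)
        then show "x \<in> (\<Union>y\<in>lev n. cball y (e/2))" using \<open>y \<in> lev n\<close> by blast
      qed
      then have "K \<subseteq> (\<Union>y\<in>lev n. cball y (e/2))"
        unfolding K_def using fin by (intro closure_minimal) auto
      also have "\<dots> \<subseteq> (\<Union>y\<in>lev n. ball y e)" using e by auto
      finally show "\<exists>k. finite k \<and> K \<subseteq> (\<Union>x\<in>k. ball x e)" using fin by blast
    qed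
  qed
  moreover have "K \<noteq> {}" using x0S K_def closure_subset by auto
  moreover have "closure (\<Union>i<N. g i ` K) = K"
  proof
    have "g i ` K \<subseteq> K" if "i < N" for i
      unfolding K_def using Sinv[OF that] closure_subset[of S]
      by (intro image_closure_subset cont that) auto
    then show "closure (\<Union>i<N. g i ` K) \<subseteq> K"
      by (intro closure_minimal) (auto simp: K_def)
    have "K = closure (\<Union>i<N. g i ` S)" using Seq K_def by simp
    also have "\<dots> \<subseteq> closure (\<Union>i<N. g i ` K)"
      unfolding K_def using closure_subset[of S] by (intro closure_mono) auto
    finally show "K \<subseteq> closure (\<Union>i<N. g i ` K)" .
  qed
  ultimately show ?thesis by blast
qed


lemma infdist_lessE:
  assumes "A \<noteq> {}" "infdist x A < r"
  shows "\<exists>y\<in>A. dist x y < r"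
proof -
  have "bdd_below ((\<lambda>a. dist x a) ` A)" by (rule bdd_belowI[of _ 0]) auto
  then show ?thesis using assms by (simp add: infdist_notempty cINF_less_iff)
qed

lemma hd_le:
  fixes X Y :: "'a::metric_space set"
  assumes "compact X" "compact Y"
  shows "x \<in> X \<Longrightarrow> infdist x Y \<le> hausdorff_dist X Y"
    and "y \<in> Y \<Longrightarrow> infdist y X \<le> hausdorff_dist X Y"
proof -
  have b: "bdd_above ((\<lambda>a. infdist a T) ` S)" if "compact S" for S T :: "'a set"
  proof -
    have "compact ((\<lambda>a. infdist a T) ` S)"
      using that by (intro compact_continuous_image continuous_on_infdist continuous_on_id)
    then show ?thesis by (intro bounded_imp_bdd_above compact_imp_bounded)
  qed
  show "x \<in> X \<Longrightarrow> infdist x Y \<le> hausdorff_dist X Y"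
    unfolding hausdorff_dist_def using b[OF assms(1), of Y]
    by (intro max.coboundedI1 cSUP_upper) auto
  show "y \<in> Y \<Longrightarrow> infdist y X \<le> hausdorff_dist X Y"
    unfolding hausdorff_dist_def using b[OF assms(2), of X]
    by (intro max.coboundedI2 cSUP_upper) auto
qed

lemma attr_props:
  fixes f :: "nat \<Rightarrow> real \<Rightarrow> 'a::complete_space \<Rightarrow> 'a"
  assumes N: "0 < N" and L: "lip_family f N t < 1"
  shows "attractor f N t \<noteq> {} \<and> compact (attractor f N t) \<and>
    ifs_img f N t (attractor f N t) = attractor f N t \<and>
    (\<forall>i<N. fixpt (f i t) \<in> attractor f N t) \<and>
    (\<forall>i<N. \<forall>x y. dist (f i t x) (f i t y) \<le> dist x y)"
proof -
  obtain c where c: "0 \<le> c" "c < 1" and lip: "\<forall>i<N. \<forall>x y. dist (f i t x) (f i t y) \<le> c * dist x y"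
    using lip_extract[OF N L] by blast
  have ex: "\<exists>A. A \<noteq> {} \<and> compact A \<and> ifs_img f N t A = A"
    unfolding ifs_img_def using ifs_exists[OF c N, of "\<lambda>i. f i t"] lip by simp
  have "\<exists>!A. A \<noteq> {} \<and> compact A \<and> ifs_img f N t A = A"
  proof (rule ex_ex1I[OF ex])
    fix A B assume A: "A \<noteq> {} \<and> compact A \<and> ifs_img f N t A = A"
      and B: "B \<noteq> {} \<and> compact B \<and> ifs_img f N t B = B"
    show "A = B"
      using ifs_unique_sub[OF c, of N "\<lambda>i. f i t" A B] ifs_unique_sub[OF c, of N "\<lambda>i. f i t" B A]
        lip A B unfolding ifs_img_def by auto
  qed
  then have P: "attractor f N t \<noteq> {} \<and> compact (attractor f N t) \<and>
    ifs_img f N t (attractor f N t) = attractor f N t"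
    unfolding attractor_def by (rule theI')
  have fx: "fixpt (f i t) \<in> attractor f N t" if i: "i < N" for i
  proof -
    have "\<exists>!x. f i t x = x" using banach_fix_type[OF c, of "f i t"] lip i by blast
    then have "f i t (fixpt (f i t)) = fixpt (f i t)" unfolding fixpt_def by (rule theI')
    then show ?thesis
      using ifs_fix_in[OF c, of N "\<lambda>i. f i t" "attractor f N t" i] lip P i
      unfolding ifs_img_def by auto
  qed
  have ne: "dist (f i t x) (f i t y) \<le> dist x y" if "i < N" for i x y
  proof -
    have "dist (f i t x) (f i t y) \<le> c * dist x y" using lip that by auto
    also have "\<dots> \<le> 1 * dist x y" using c by (intro mult_right_mono) auto
    finally show ?thesis by simp
  qed
  show ?thesis using P fx ne by auto
qed


lemma ev_obtain: "eventually P sequentially \<Longrightarrow> \<exists>n. P n"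
  by (auto simp: eventually_sequentially)

theorem mainTheorem8:
  fixes f :: "nat \<Rightarrow> real \<Rightarrow> 'a::complete_space \<Rightarrow> 'a"
    and N :: nat and Aup :: "'a set"
  assumes N2: "N \<ge> 2"
    and cont: "\<And>i t. i < N \<Longrightarrow> t \<in> {0..1} \<Longrightarrow> continuous_on UNIV (f i t)"
    and H1: "\<And>i x. i < N \<Longrightarrow> continuous_on {0..1} (\<lambda>t. f i t x)"
    and H2: "\<And>t. t \<in> {0..<1} \<Longrightarrow> lip_family f N t < 1"
    and up: "upper_transition_attractor f N Aup"
  shows "ifs_img f N 1 Aup = Aup \<and>
    (\<forall>q :: nat \<Rightarrow> 'a.
       (\<forall>i<N. ((\<lambda>t. fixpt (f i t)) \<longlongrightarrow> q i) (at_left 1)) \<longrightarrow>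
       q ` {..<N} \<subseteq> Aup \<and>
       (\<forall>Alow. lower_transition_attractor f N (q ` {..<N}) Alow \<longrightarrow> Alow \<subseteq> Aup))"
proof -
  have N: "0 < N" using N2 by auto
  obtain tn where tn: "\<And>n. tn n \<in> {0..<1}" "tn \<longlonglongrightarrow> 1"
    and hlim: "(\<lambda>n. hausdorff_dist (attractor f N (tn n)) Aup) \<longlonglongrightarrow> 0"
    and Aupne: "Aup \<noteq> {}" and Aupc: "compact Aup"
    using up unfolding upper_transition_attractor_def by blast
  define A where "A n = attractor f N (tn n)" for n
  define h where "h n = hausdorff_dist (A n) Aup" for n
  have h0: "h \<longlonglongrightarrow> 0" using hlim unfolding h_def A_def .
  have P: "A n \<noteq> {}" "compact (A n)" "ifs_img f N (tn n) (A n) = A n"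
     "\<And>i. i < N \<Longrightarrow> fixpt (f i (tn n)) \<in> A n"
     "\<And>i x y. i < N \<Longrightarrow> dist (f i (tn n) x) (f i (tn n) y) \<le> dist x y" for n
    using attr_props[OF N H2[OF tn(1)[of n]]] unfolding A_def by auto
  have Ainv: "f i (tn n) ` A n \<subseteq> A n" if "i < N" for i n
    using P(3)[of n] closure_subset[of "\<Union>i<N. f i (tn n) ` A n"] that
    unfolding ifs_img_def by auto
  have hd1: "x \<in> A n \<Longrightarrow> infdist x Aup \<le> h n" for x n
    unfolding h_def using hd_le(1)[OF P(2) Aupc] .
  have hd2: "y \<in> Aup \<Longrightarrow> infdist y (A n) \<le> h n" for y n
    unfolding h_def using hd_le(2)[OF P(2) Aupc] .
  have pc: "(\<lambda>n. f i (tn n) x) \<longlonglongrightarrow> f i 1 x" if i: "i < N" for i x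
    using continuous_on_tendsto_compose[OF H1[OF i] tn(2)] tn(1)
    by (auto simp: less_imp_le)
  have ne1: "dist (f i 1 x) (f i 1 y) \<le> dist x y" if i: "i < N" for i x y
  proof -
    have "(\<lambda>n. dist (f i (tn n) x) (f i (tn n) y)) \<longlonglongrightarrow> dist (f i 1 x) (f i 1 y)"
      using pc[OF i] by (intro tendsto_dist)
    then show ?thesis using P(5)[OF i] by (intro LIMSEQ_le_const2) auto
  qed
  have unif: "eventually (\<lambda>n. \<forall>i<N. \<forall>c\<in>Aup. dist (f i (tn n) c) (f i 1 c) < e) sequentially"
    if e: "e > 0" for e
  proof -
    have "e/3 > 0" using e by simp
    then obtain k where k: "finite k" "Aup \<subseteq> (\<Union>x\<in>k. ball x (e/3))"
      using Aupc unfolding compact_eq_totally_bounded by blast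
    have "eventually (\<lambda>n. \<forall>p\<in>k. \<forall>i\<in>{..<N}. dist (f i (tn n) p) (f i 1 p) < e/3) sequentially"
    proof (intro eventually_ball_finite ballI k(1) finite_lessThan)
      fix p i assume "i \<in> {..<N}"
      then have i: "i < N" by simp
      show "\<forall>\<^sub>F n in sequentially. dist (f i (tn n) p) (f i 1 p) < e/3"
        using tendstoD[OF pc[OF i, of p], of "e/3"] e by auto
    qed
    then show ?thesis
    proof (rule eventually_mono)
      fix n assume H: "\<forall>p\<in>k. \<forall>i\<in>{..<N}. dist (f i (tn n) p) (f i 1 p) < e/3"
      show "\<forall>i<N. \<forall>c\<in>Aup. dist (f i (tn n) c) (f i 1 c) < e"
      proof (intro allI impI ballI)
        fix i c assume i: "i < N" and c: "c \<in> Aup"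
        then obtain p where p: "p \<in> k" "dist p c < e/3" using k by auto
        have t1: "dist (f i (tn n) c) (f i 1 c) \<le> dist (f i (tn n) c) (f i (tn n) p) + dist (f i (tn n) p) (f i 1 c)"
          by (rule dist_triangle)
        have t2: "dist (f i (tn n) p) (f i 1 c) \<le> dist (f i (tn n) p) (f i 1 p) + dist (f i 1 p) (f i 1 c)"
          by (rule dist_triangle)
        have b1: "dist (f i (tn n) c) (f i (tn n) p) \<le> dist c p" using P(5)[OF i] .
        have b2: "dist (f i 1 p) (f i 1 c) \<le> dist p c" using ne1[OF i] .
        have b3: "dist (f i (tn n) p) (f i 1 p) < e/3" using H p(1) i by auto
        have "dist c p = dist p c" by (rule dist_commute)
        then show "dist (f i (tn n) c) (f i 1 c) < e" using t1 t2 b1 b2 b3 p(2) by linarith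
      qed
    qed
  qed
  have hev: "eventually (\<lambda>n. h n < e) sequentially" if "e > 0" for e
    using h0 that by (intro order_tendstoD) auto
  have closedAup: "closed Aup" using Aupc compact_imp_closed by auto
  have zero_le: "x \<le> 0" if "\<And>e. e > 0 \<Longrightarrow> x < e" for x :: real
  proof (rule ccontr)
    assume "\<not> x \<le> 0"
    then have "x < x" using that[of x] by simp
    then show False by simp
  qed
  have sub1: "f i 1 a \<in> Aup" if i: "i < N" and a: "a \<in> Aup" for i a
  proof -
    have "infdist (f i 1 a) Aup \<le> 0"
    proof (rule zero_le)
      fix e :: real assume e: "e > 0"
      have "eventually (\<lambda>n. h n < e/3 \<and> dist (f i (tn n) a) (f i 1 a) < e/3) sequentially"
        using hev[of "e/3"] tendstoD[OF pc[OF i, of a], of "e/3"] e by (intro eventually_conj) auto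
      then obtain n where n: "h n < e/3" "dist (f i (tn n) a) (f i 1 a) < e/3"
      by (blast dest: ev_obtain)
      have "infdist a (A n) < e/3" using hd2[OF a, of n] n by linarith
      then obtain a' where a': "a' \<in> A n" "dist a a' < e/3" using infdist_lessE[OF P(1)] by blast
      have fa': "f i (tn n) a' \<in> A n" using Ainv[OF i] a' by auto
      have t1: "infdist (f i 1 a) Aup \<le> infdist (f i (tn n) a') Aup + dist (f i 1 a) (f i (tn n) a')"
        by (rule infdist_triangle)
      have t2: "dist (f i 1 a) (f i (tn n) a') \<le> dist (f i 1 a) (f i (tn n) a) + dist (f i (tn n) a) (f i (tn n) a')"
        by (rule dist_triangle)
      have b1: "dist (f i (tn n) a) (f i (tn n) a') \<le> dist a a'" using P(5)[OF i] .
      have b2: "infdist (f i (tn n) a') Aup \<le> h n" using hd1[OF fa'] .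
      have "dist (f i 1 a) (f i (tn n) a) = dist (f i (tn n) a) (f i 1 a)" by (rule dist_commute)
      then show "infdist (f i 1 a) Aup < e" using t1 t2 b1 b2 n a'(2) by linarith
    qed
    then have "infdist (f i 1 a) Aup = 0" using infdist_nonneg[of "f i 1 a" Aup] by linarith
    then show ?thesis using in_closed_iff_infdist_zero[OF closedAup Aupne] by simp
  qed
  have sup1: "a \<in> closure (\<Union>i<N. f i 1 ` Aup)" if a: "a \<in> Aup" for a
    unfolding closure_approachable
  proof (intro allI impI)
    fix e :: real assume e: "e > 0"
    have "eventually (\<lambda>n. h n < e/4 \<and> (\<forall>i<N. \<forall>c\<in>Aup. dist (f i (tn n) c) (f i 1 c) < e/4)) sequentially"
      using hev[of "e/4"] unif[of "e/4"] e by (intro eventually_conj) auto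
    then obtain n where n: "h n < e/4" "\<And>i c. i < N \<Longrightarrow> c \<in> Aup \<Longrightarrow> dist (f i (tn n) c) (f i 1 c) < e/4"
      by (blast dest: ev_obtain)
    have "infdist a (A n) < e/4" using hd2[OF a, of n] n by linarith
    then obtain a' where a': "a' \<in> A n" "dist a a' < e/4" using infdist_lessE[OF P(1)] by blast
    have "a' \<in> closure (\<Union>i<N. f i (tn n) ` A n)" using P(3)[of n] a' unfolding ifs_img_def by simp
    moreover have "e/4 > 0" using e by simp
    ultimately obtain y where y: "y \<in> (\<Union>i<N. f i (tn n) ` A n)" "dist y a' < e/4"
      unfolding closure_approachable by blast
    then obtain i b where ib: "i < N" "b \<in> A n" "y = f i (tn n) b" by auto
    have "infdist b Aup < e/4" using hd1[OF ib(2)] n by linarith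
    then obtain c where c: "c \<in> Aup" "dist b c < e/4" using infdist_lessE[OF Aupne] by blast
    have t1: "dist (f i 1 c) a \<le> dist (f i 1 c) (f i (tn n) c) + dist (f i (tn n) c) a" by (rule dist_triangle)
    have t2: "dist (f i (tn n) c) a \<le> dist (f i (tn n) c) (f i (tn n) b) + dist (f i (tn n) b) a" by (rule dist_triangle)
    have t3: "dist (f i (tn n) b) a \<le> dist (f i (tn n) b) a' + dist a' a" by (rule dist_triangle)
    have b1: "dist (f i 1 c) (f i (tn n) c) < e/4" using n(2)[OF ib(1) c(1)] by (simp add: dist_commute)
    have b2: "dist (f i (tn n) c) (f i (tn n) b) \<le> dist c b" using P(5)[OF ib(1)] .
    have b3: "dist (f i (tn n) b) a' < e/4" using y ib by simp
    have "dist c b = dist b c" "dist a' a = dist a a'" by (simp_all add: dist_commute)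
    then have "dist (f i 1 c) a < e" using t1 t2 t3 b1 b2 b3 c(2) a'(2) by linarith
    then show "\<exists>y\<in>(\<Union>i<N. f i 1 ` Aup). dist y a < e" using ib(1) c(1) by blast
  qed
  have part1: "ifs_img f N 1 Aup = Aup"
    unfolding ifs_img_def
  proof
    show "closure (\<Union>i<N. f i 1 ` Aup) \<subseteq> Aup"
      using sub1 closedAup by (intro closure_minimal) auto
    show "Aup \<subseteq> closure (\<Union>i<N. f i 1 ` Aup)" using sup1 by auto
  qed
  have tnl: "filterlim tn (at_left 1) sequentially"
    using tn by (intro tendsto_imp_filterlim_at_left always_eventually) auto
  have part2: "q ` {..<N} \<subseteq> Aup \<and>
       (\<forall>Alow. lower_transition_attractor f N (q ` {..<N}) Alow \<longrightarrow> Alow \<subseteq> Aup)"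
    if q: "\<forall>i<N. ((\<lambda>t. fixpt (f i t)) \<longlongrightarrow> q i) (at_left 1)" for q
  proof -
    have qin: "q i \<in> Aup" if i: "i < N" for i
    proof -
      have ql: "(\<lambda>n. fixpt (f i (tn n))) \<longlonglongrightarrow> q i"
        using filterlim_compose[OF q[rule_format, OF i] tnl] by simp
      have "infdist (q i) Aup \<le> 0"
      proof (rule zero_le)
        fix e :: real assume e: "e > 0"
        have "eventually (\<lambda>n. h n < e/2 \<and> dist (fixpt (f i (tn n))) (q i) < e/2) sequentially"
          using hev[of "e/2"] tendstoD[OF ql, of "e/2"] e by (intro eventually_conj) auto
        then obtain n where n: "h n < e/2" "dist (fixpt (f i (tn n))) (q i) < e/2"
      by (blast dest: ev_obtain)
        have "infdist (q i) Aup \<le> infdist (fixpt (f i (tn n))) Aup + dist (q i) (fixpt (f i (tn n)))"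
          by (rule infdist_triangle)
        moreover have "dist (q i) (fixpt (f i (tn n))) = dist (fixpt (f i (tn n))) (q i)"
          by (rule dist_commute)
        ultimately show "infdist (q i) Aup < e"
          using hd1[OF P(4)[OF i, of n]] n by linarith
      qed
      then have "infdist (q i) Aup = 0" using infdist_nonneg[of "q i" Aup] by linarith
      then show ?thesis using in_closed_iff_infdist_zero[OF closedAup Aupne] by simp
    qed
    then have Q: "q ` {..<N} \<subseteq> Aup" by auto
    moreover have "\<forall>Alow. lower_transition_attractor f N (q ` {..<N}) Alow \<longrightarrow> Alow \<subseteq> Aup"
      using Q part1 unfolding lower_transition_attractor_def by blast
    ultimately show ?thesis by blast
  qed
  show ?thesis using part1 part2 by blast
qed

end
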